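(* Consider the system \[ x_{k+1} = x_k - \rho y_k + \hat g(y_k,w_k),\qquad y_{k+1} = (1-\beta)y_k + \hat h(y_{k-1},w_{k-1})\bigl(J(x_k)-J(x_{k-1})\bigr) \] with the setup described in the context. Then for every $k\ge1$, \[ \mathbb{E}[\tilde x_{k+1}^2]=\mathbb{E}[\tilde x_k^2]+(\psi+\rho^2)\mathbb{E}[y_k^2]-2\rho\,\mathbb{E}[\tilde x_ky_k]+\varepsilon\psi\bigl(\varepsilon+2\mathbb{E}[|y_k|]\bigr), \] and \[ \begin{aligned} \mathbb{E}[y_{k+1}^2]&=(1-\beta)^2\mathbb{E}[y_k^2]+2(1-\beta)\mu\gamma\,\mathbb{E}[\tilde x_ky_k]+\mu^2(\rho^2\chi+\gamma^2)\mathbb{E}[\tilde x_{k-1}^2]\\ &\quad-\mu^2\rho(3\gamma^2+\rho^2\chi)\mathbb{E}[\tilde x_{k-1}y_{k-1}]+\frac{\mu^2(\rho^4\chi+\gamma^2\psi+6\gamma^2\rho^2)}{4}\mathbb{E}[y_{k-1}^2]+R_y(\varepsilon), \end{aligned} \] where \[ \begin{aligned} R_y(\varepsilon)&:=\mu^2\varepsilon\Bigl(\frac{\gamma^2\psi}{4}\bigl(\varepsilon+2\mathbb{E}[|y_{k-1}|]\bigr)-\frac{\rho^2\chi}{2}\mathbb{E}\bigl[T_1(y_{k-1},\varepsilon)(\tilde x_k^2+\tilde x_{k-1}^2)\bigr]\\ &\qquad+\frac{\rho^2(\rho^2\chi+2\gamma^2)}{4}\mathbb{E}\bigl[T_1(y_{k-1},\varepsilon)y_{k-1}^2\bigr]+\frac{\rho^2\gamma^2}{2}\mathbb{E}\bigl[T_2(y_{k-1},\varepsilon)\bigr]\Bigr),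 \end{aligned} \] with $T_1(y,\varepsilon):=\frac{\varepsilon+2|y|}{(|y|+\varepsilon)^2}$ and $T_2(y,\varepsilon):=\frac{\varepsilon(\varepsilon+2|y|)^2}{(|y|+\varepsilon)^2}$.
   Context: Setup. Parameters: $\rho>0$, $\beta\in(0,2)$, $\varepsilon>0$, $\omega>0$. The random variables $w_i$, $i\in\mathbb{N}\cup\{0\}$, are i.i.d., each taking the value $-\omega$ or $\omega$ with probability $1/2$. The functions $h,g:\mathbb{R}\to\mathbb{R}$ are odd, satisfy $\mathrm{sign}(g(w))=\mathrm{sign}(h(w))$ for all $w$, and $g(w)=h(w)=0$ if and only if $w=0$. Define $\hat h(y,w):=\frac{h(w)}{|y|+\varepsilon}$ and $\hat g(y,w):=(|y|+\varepsilon)g(w)$. The objective is $J(x)=J^*+\frac{\mu}{2}(x-x^* )^2$ with $\mu>0$, $x^*,J^*\in\mathbb{R}$. The initial data $x_0,y_0$ and the initialization $y_1$ (the $y$-update being applied for $k\ge1$) are deterministic. Notation: $\tilde x_k:=x_k-x^*$, $\chi:=\mathbb{E}[h(w_k)^2]$, $\psi:=\mathbb{E}[g(w_k)^2]$, $\gamma:=\mathbb{E}[h(w_k)g(w_k)]=\sqrt{\chi\psi}$. *)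

theory Defs
  imports "HOL-Probability.Probability"
begin

definition hat_h :: "(real \<Rightarrow> real) \<Rightarrow> real \<Rightarrow> real \<Rightarrow> real \<Rightarrow> real" where
  "hat_h h eps y w = h w / (\<bar>y\<bar> + eps)"

definition hat_g :: "(real \<Rightarrow> real) \<Rightarrow> real \<Rightarrow> real \<Rightarrow> real \<Rightarrow> real" where
  "hat_g g eps y w = (\<bar>y\<bar> + eps) * g w"

text \<open>Trajectory (x_k, y_k) driven by a given realisation w of the noise sequence. The x-update holds for k \<ge> 0,
  the y-update for k \<ge> 1 (y_1 is a given deterministic initialisation).\<close>
fun xseq :: "real \<Rightarrow> real \<Rightarrow> real \<Rightarrow> (real \<Rightarrow> real) \<Rightarrow> (real \<Rightarrow> real) \<Rightarrow> (real \<Rightarrow> real)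
      \<Rightarrow> real \<Rightarrow> real \<Rightarrow> real \<Rightarrow> (nat \<Rightarrow> real) \<Rightarrow> nat \<Rightarrow> real"
and yseq :: "real \<Rightarrow> real \<Rightarrow> real \<Rightarrow> (real \<Rightarrow> real) \<Rightarrow> (real \<Rightarrow> real) \<Rightarrow> (real \<Rightarrow> real)
      \<Rightarrow> real \<Rightarrow> real \<Rightarrow> real \<Rightarrow> (nat \<Rightarrow> real) \<Rightarrow> nat \<Rightarrow> real" where
  "xseq rho beta eps J h g x0 y0 y1 w 0 = x0"
| "xseq rho beta eps J h g x0 y0 y1 w (Suc k) =
     xseq rho beta eps J h g x0 y0 y1 w k - rho * yseq rho beta eps J h g x0 y0 y1 w k
     + hat_g g eps (yseq rho beta eps J h g x0 y0 y1 w k) (w k)"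
| "yseq rho beta eps J h g x0 y0 y1 w 0 = y0"
| "yseq rho beta eps J h g x0 y0 y1 w (Suc 0) = y1"
| "yseq rho beta eps J h g x0 y0 y1 w (Suc (Suc k)) =
     (1 - beta) * yseq rho beta eps J h g x0 y0 y1 w (Suc k)
     + hat_h h eps (yseq rho beta eps J h g x0 y0 y1 w k) (w k)
       * (J (xseq rho beta eps J h g x0 y0 y1 w (Suc k)) - J (xseq rho beta eps J h g x0 y0 y1 w k))"

definition T1 :: "real \<Rightarrow> real \<Rightarrow> real" where
  "T1 y eps = (eps + 2 * \<bar>y\<bar>) / (\<bar>y\<bar> + eps)^2"

definition T2 :: "real \<Rightarrow> real \<Rightarrow> real" where
  "T2 y eps = eps * (eps + 2 * \<bar>y\<bar>)^2 / (\<bar>y\<bar> + eps)^2"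

end

theory Submission
  imports Defs
begin


definition dep :: "nat \<Rightarrow> ((nat \<Rightarrow> real) \<Rightarrow> real) \<Rightarrow> bool" where
  "dep m G \<longleftrightarrow> (\<forall>w w'. (\<forall>i<m. w i = w' i) \<longrightarrow> G w = G w')"

lemma depI: "(\<And>w w'. (\<forall>i<m. w i = w' i) \<Longrightarrow> G w = G w') \<Longrightarrow> dep m G"
  unfolding dep_def by blast

lemma xy_dep:
  assumes "\<forall>i<m. w i = w' i"
  shows "\<forall>n\<le>m. xseq rho beta eps J h g x0 y0 y1 w n = xseq rho beta eps J h g x0 y0 y1 w' n
         \<and> yseq rho beta eps J h g x0 y0 y1 w n = yseq rho beta eps J h g x0 y0 y1 w' n"
proof (intro allI impI)
  fix n assume "n \<le> m"
  then show "xseq rho beta eps J h g x0 y0 y1 w n = xseq rho beta eps J h g x0 y0 y1 w' n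
         \<and> yseq rho beta eps J h g x0 y0 y1 w n = yseq rho beta eps J h g x0 y0 y1 w' n"
  proof (induction n rule: less_induct)
    case (less n)
    show ?case
    proof (cases n)
      case 0 then show ?thesis by simp
    next
      case (Suc k)
      have IHk: "xseq rho beta eps J h g x0 y0 y1 w k = xseq rho beta eps J h g x0 y0 y1 w' k
         \<and> yseq rho beta eps J h g x0 y0 y1 w k = yseq rho beta eps J h g x0 y0 y1 w' k"
        using less Suc by auto
      have wk: "w k = w' k" using assms less Suc by auto
      have x: "xseq rho beta eps J h g x0 y0 y1 w n = xseq rho beta eps J h g x0 y0 y1 w' n"
        using IHk wk Suc by simp
      have y: "yseq rho beta eps J h g x0 y0 y1 w n = yseq rho beta eps J h g x0 y0 y1 w' n"
      proof (cases k)
        case 0 then show ?thesis using Suc by simp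
      next
        case (Suc j)
        have IHj: "xseq rho beta eps J h g x0 y0 y1 w j = xseq rho beta eps J h g x0 y0 y1 w' j
         \<and> yseq rho beta eps J h g x0 y0 y1 w j = yseq rho beta eps J h g x0 y0 y1 w' j"
          using less Suc \<open>n = Suc k\<close> by auto
        have wj: "w j = w' j" using assms less Suc \<open>n = Suc k\<close> by auto
        show ?thesis using IHk IHj wj Suc \<open>n = Suc k\<close> by simp
      qed
      show ?thesis using x y by simp
    qed
  qed
qed

locale coin = prob_space M for M :: "'s measure" +
  fixes W :: "nat \<Rightarrow> 's \<Rightarrow> real" and \<omega> :: real
  assumes om: "\<omega> > 0" and Wm: "\<And>i. W i \<in> borel_measurable M"
    and ind: "indep_vars (\<lambda>_. borel) W UNIV"
    and Wv: "\<And>i s. s \<in> space M \<Longrightarrow> W i s = - \<omega> \<or> W i s = \<omega>"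
    and Pp: "\<And>i. measure M {s \<in> space M. W i s = \<omega>} = 1/2"
    and Pm: "\<And>i. measure M {s \<in> space M. W i s = - \<omega>} = 1/2"
begin

definition S :: "nat \<Rightarrow> (nat \<Rightarrow> real) set" where
  "S m = PiE {..<m} (\<lambda>_. {-\<omega>, \<omega>})"

definition mod' :: "nat \<Rightarrow> ((nat \<Rightarrow> real) \<Rightarrow> real) \<Rightarrow> (nat \<Rightarrow> real) \<Rightarrow> real" where
  "mod' m G v = (\<Sum>\<tau>\<in>S m. G \<tau> * indicator {\<tau>} v)"

lemma finS: "finite (S m)"
  unfolding S_def by (intro finite_PiE) auto

lemma V_in: "s \<in> space M \<Longrightarrow> restrict (\<lambda>i. W i s) {..<m} \<in> S m"
  unfolding S_def using Wv by auto

lemma mod_eq: "v \<in> S m \<Longrightarrow> mod' m G v = G v"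
  unfolding mod'_def using finS[of m]
  by (simp add: indicator_def sum.delta' if_distrib[of "\<lambda>x. _ * x"] cong: if_cong)

lemma mod_meas: "mod' m G \<in> borel_measurable (PiM {..<m} (\<lambda>_. borel))"
proof -
  have "{\<tau>} \<in> sets (PiM {..<m} (\<lambda>_. borel))" if "\<tau> \<in> S m" for \<tau>
  proof -
    have "{\<tau>} = PiE {..<m} (\<lambda>i. {\<tau> i})" using that unfolding S_def
      by (auto simp: PiE_iff extensional_def intro!: extensionalityI[of _ "{..<m}"])
    also have "\<dots> \<in> sets (PiM {..<m} (\<lambda>_. borel))"
      by (intro sets_PiM_I_finite) auto
    finally show ?thesis .
  qed
  then show ?thesis unfolding mod'_def
    by (intro borel_measurable_sum borel_measurable_times borel_measurable_const borel_measurable_indicator) auto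
qed

lemma V_meas: "(\<lambda>s. restrict (\<lambda>i. W i s) {..<m}) \<in> measurable M (PiM {..<m} (\<lambda>_. borel))"
  by (intro measurable_restrict Wm)

lemma G_eq:
  assumes "dep m G" "s \<in> space M"
  shows "G (\<lambda>i. W i s) = mod' m G (restrict (\<lambda>i. W i s) {..<m})"
proof -
  have "G (\<lambda>i. W i s) = G (restrict (\<lambda>i. W i s) {..<m})"
    using assms(1) unfolding dep_def by auto
  also have "\<dots> = mod' m G (restrict (\<lambda>i. W i s) {..<m})"
    using mod_eq V_in[OF assms(2)] by simp
  finally show ?thesis .
qed

lemma integ:
  assumes "dep m G"
  shows "integrable M (\<lambda>s. G (\<lambda>i. W i s))"
proof -
  have meas: "(\<lambda>s. mod' m G (restrict (\<lambda>i. W i s) {..<m})) \<in> borel_measurable M"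
    using measurable_comp[OF V_meas mod_meas] by (simp add: comp_def)
  have "integrable M (\<lambda>s. mod' m G (restrict (\<lambda>i. W i s) {..<m}))"
  proof (rule integrable_const_bound[where B="\<Sum>\<tau>\<in>S m. \<bar>G \<tau>\<bar>"])
    show "AE x in M. norm (mod' m G (restrict (\<lambda>i. W i x) {..<m})) \<le> (\<Sum>\<tau>\<in>S m. \<bar>G \<tau>\<bar>)"
    proof (rule AE_I2)
      fix x assume x: "x \<in> space M"
      show "norm (mod' m G (restrict (\<lambda>i. W i x) {..<m})) \<le> (\<Sum>\<tau>\<in>S m. \<bar>G \<tau>\<bar>)"
      proof -
        have "\<bar>G (restrict (\<lambda>i. W i x) {..<m})\<bar> \<le> (\<Sum>\<tau>\<in>S m. \<bar>G \<tau>\<bar>)"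
          by (rule member_le_sum[OF V_in[OF x]]) (auto simp: finS)
        then show ?thesis using mod_eq[OF V_in[OF x]] by simp
      qed
    qed
  qed (rule meas)
  then show ?thesis
    by (rule Bochner_Integration.integrable_cong[THEN iffD1, rotated 2]) (auto simp: G_eq[OF assms])
qed

definition sg :: "real \<Rightarrow> real" where
  "sg v = indicator {\<omega>} v - indicator {-\<omega>} v"

lemma sg_meas: "sg \<in> borel_measurable borel"
  unfolding sg_def by measurable

lemma Wset: "{s \<in> space M. W i s = c} \<in> sets M"
  using Wm[of i] by measurable

lemma E_sg: "integral\<^sup>L M (\<lambda>s. sg (W n s)) = 0"
proof -
  have "integral\<^sup>L M (\<lambda>s. sg (W n s)) = integral\<^sup>L M (\<lambda>s. indicator {s \<in> space M. W n s = \<omega>} s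
     - indicator {s \<in> space M. W n s = -\<omega>} s)"
    by (rule Bochner_Integration.integral_cong) (auto simp: sg_def indicator_def)
  also have "\<dots> = 0"
    using Wset[of n \<omega>] Wset[of n "-\<omega>"] Pp[of n] Pm[of n]
    by (subst Bochner_Integration.integral_diff) (auto simp: emeasure_eq_measure)
  finally show ?thesis .
qed

lemma indep_mult:
  assumes "dep n B"
  shows "integral\<^sup>L M (\<lambda>s. B (\<lambda>i. W i s) * sg (W n s)) = 0"
proof -
  have iv: "indep_var (PiM {..<n} (\<lambda>_. borel)) (\<lambda>s. restrict (\<lambda>i. W i s) {..<n})
                (PiM {n} (\<lambda>_. borel)) (\<lambda>s. restrict (\<lambda>i. W i s) {n})"
    by (rule indep_var_restrict[OF ind]) auto
  have iv2: "indep_var borel (mod' n B \<circ> (\<lambda>s. restrict (\<lambda>i. W i s) {..<n}))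
                borel ((\<lambda>f. sg (f n)) \<circ> (\<lambda>s. restrict (\<lambda>i. W i s) {n}))"
    apply (rule indep_var_compose[OF iv mod_meas])
    using measurable_comp[OF measurable_component_singleton[of n "{n}" "\<lambda>_. borel"] sg_meas]
    by (simp add: comp_def)
  have i1: "integrable M (mod' n B \<circ> (\<lambda>s. restrict (\<lambda>i. W i s) {..<n}))"
  proof -
    have "integrable M (\<lambda>s. mod' n B (restrict (\<lambda>i. W i s) {..<n}))"
      using integ[OF assms] Bochner_Integration.integrable_cong[OF refl G_eq[OF assms], of M] by simp
    then show ?thesis by (simp add: comp_def)
  qed
  have i2: "integrable M ((\<lambda>f. sg (f n)) \<circ> (\<lambda>s. restrict (\<lambda>i. W i s) {n}))"
    using integ[of "Suc n" "\<lambda>w. sg (w n)"] by (simp add: comp_def dep_def)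
  have "integral\<^sup>L M (\<lambda>s. B (\<lambda>i. W i s) * sg (W n s)) =
     integral\<^sup>L M (\<lambda>s. (mod' n B \<circ> (\<lambda>s. restrict (\<lambda>i. W i s) {..<n})) s * ((\<lambda>f. sg (f n)) \<circ> (\<lambda>s. restrict (\<lambda>i. W i s) {n})) s)"
    by (rule Bochner_Integration.integral_cong) (auto simp: G_eq[OF assms])
  also have "\<dots> = integral\<^sup>L M (mod' n B \<circ> (\<lambda>s. restrict (\<lambda>i. W i s) {..<n})) * 
                  integral\<^sup>L M ((\<lambda>f. sg (f n)) \<circ> (\<lambda>s. restrict (\<lambda>i. W i s) {n}))"
    by (rule indep_var_lebesgue_integral[OF iv2 i1 i2])
  also have "integral\<^sup>L M ((\<lambda>f. sg (f n)) \<circ> (\<lambda>s. restrict (\<lambda>i. W i s) {n})) = 0"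
    using E_sg by (simp add: comp_def)
  finally show ?thesis by simp
qed

lemma avg:
  assumes "dep (Suc n) F"
  shows "integral\<^sup>L M (\<lambda>s. F (\<lambda>i. W i s)) =
     integral\<^sup>L M (\<lambda>s. (F ((\<lambda>i. W i s)(n := \<omega>)) + F ((\<lambda>i. W i s)(n := -\<omega>))) / 2)"
proof -
  define A where "A w = (F (w(n := \<omega>)) + F (w(n := -\<omega>))) / 2" for w
  define B where "B w = (F (w(n := \<omega>)) - F (w(n := -\<omega>))) / 2" for w
  have dA: "dep n A" unfolding A_def
    using assms unfolding dep_def by (metis (no_types, lifting) fun_upd_apply less_Suc_eq)
  have dB: "dep n B" unfolding B_def
    using assms unfolding dep_def by (metis (no_types, lifting) fun_upd_apply less_Suc_eq)
  have dBs: "dep (Suc n) (\<lambda>w. B w * sg (w n))"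
    using dB unfolding dep_def by (metis less_Suc_eq lessI)
  have pw: "F (\<lambda>i. W i s) = A (\<lambda>i. W i s) + B (\<lambda>i. W i s) * sg (W n s)" if "s \<in> space M" for s
  proof -
    have ne: "\<omega> \<noteq> -\<omega>" using om by simp
    from Wv[OF that, of n] show ?thesis
    proof
      assume h: "W n s = -\<omega>"
      have "(\<lambda>i. W i s)(n := -\<omega>) = (\<lambda>i. W i s)" using h by auto
      then show ?thesis using h ne unfolding A_def B_def sg_def by (simp add: field_simps)
    next
      assume h: "W n s = \<omega>"
      have "(\<lambda>i. W i s)(n := \<omega>) = (\<lambda>i. W i s)" using h by auto
      then show ?thesis using h ne unfolding A_def B_def sg_def by (simp add: field_simps)
    qed
  qed
  have "integral\<^sup>L M (\<lambda>s. F (\<lambda>i. W i s)) = integral\<^sup>L M (\<lambda>s. A (\<lambda>i. W i s) + B (\<lambda>i. W i s) * sg (W n s))"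
    by (rule Bochner_Integration.integral_cong) (auto simp: pw)
  also have "\<dots> = integral\<^sup>L M (\<lambda>s. A (\<lambda>i. W i s))"
    using integ[OF dA] integ[OF dBs] indep_mult[OF dB] by simp
  finally show ?thesis unfolding A_def .
qed

end


lemma alg1:
  fixes x y b rho eps :: real
  assumes e: "eps > 0"
  defines "u \<equiv> \<bar>y\<bar> + eps"
  shows "(((x - rho*y + u*b)^2 - (x^2 + (b^2+rho^2)*y^2 - 2*rho*x*y + eps*b^2*(eps + 2*\<bar>y\<bar>)))
        + ((x - rho*y + u*(-b))^2 - (x^2 + (b^2+rho^2)*y^2 - 2*rho*x*y + eps*b^2*(eps + 2*\<bar>y\<bar>)))) / 2 = 0"
proof -
  obtain t where t: "t = \<bar>y\<bar>" by blast
  have yy: "y^2 = t^2" using t by simp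
  show ?thesis unfolding u_def t[symmetric] using yy by algebra
qed

lemma alg2:
  fixes x y z a b rho beta mu eps :: real
  assumes e: "eps > 0"
  defines "u \<equiv> \<bar>y\<bar> + eps"
  defines "R \<equiv> \<lambda>X1. (1-beta)^2 * z^2 + 2*(1-beta)*mu*(a*b)* (X1 * z) + mu^2*(rho^2*a^2+(a*b)^2) * x^2
     - mu^2*rho*(3*(a*b)^2+rho^2*a^2) * (x * y) + mu^2*(rho^4*a^2 + (a*b)^2*b^2 + 6*(a*b)^2*rho^2)/4 * y^2
     + mu^2*eps*((a*b)^2*b^2/4*(eps + 2*\<bar>y\<bar>) - rho^2*a^2/2*(T1 y eps * (X1^2 + x^2))
        + rho^2*(rho^2*a^2 + 2*(a*b)^2)/4 * (T1 y eps * y^2) + rho^2*(a*b)^2/2 * T2 y eps)"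
  defines "X1p \<equiv> x - rho*y + u*b" and "X1m \<equiv> x - rho*y + u*(-b)"
  shows "((((1-beta)*z + a/u * (mu/2*X1p^2 - mu/2*x^2))^2 - R X1p)
        + (((1-beta)*z + (-a)/u * (mu/2*X1m^2 - mu/2*x^2))^2 - R X1m)) / 2 = 0"
proof -
  obtain t where t: "t = \<bar>y\<bar>" by blast
  have yy: "y^2 = t^2" using t by simp
  have up: "t + eps > 0" "t + eps \<noteq> 0" using t e by auto
  show ?thesis unfolding R_def X1p_def X1m_def u_def T1_def T2_def t[symmetric]
    using up yy by (simp add: field_simps) algebra
qed


locale sys = coin M W \<omega> for M :: "'s measure" and W \<omega> +
  fixes rho beta eps \<mu> xstar Jstar x0 y0 y1 :: real and J h g :: "real \<Rightarrow> real"
  assumes eps: "eps > 0"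
    and hodd: "\<And>v. h (- v) = - h v" and godd: "\<And>v. g (- v) = - g v"
    and Jdef: "J = (\<lambda>x. Jstar + \<mu> / 2 * (x - xstar)^2)"
begin

abbreviation "xs \<equiv> xseq rho beta eps J h g x0 y0 y1"
abbreviation "ys \<equiv> yseq rho beta eps J h g x0 y0 y1"

lemma ys_Suc_dep: "\<forall>i<m. w i = w' i \<Longrightarrow> ys w (Suc m) = ys w' (Suc m)"
proof (cases m)
  case (Suc j)
  assume a: "\<forall>i<m. w i = w' i"
  have "j < m" "j \<le> m" "Suc j \<le> m" using Suc by auto
  then show ?thesis using xy_dep[OF a, of rho beta eps J h g x0 y0 y1] a Suc by simp
qed simp

lemma upd_dep:
  assumes "n \<le> k" shows "xs (w(k := c)) n = xs w n" "ys (w(k := c)) n = ys w n"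
  using xy_dep[of k "w(k := c)" w rho beta eps J h g x0 y0 y1] assms by auto

lemma upd_dep2: "ys (w(k := c)) (Suc k) = ys w (Suc k)"
  using ys_Suc_dep[of k "w(k := c)" w] by auto

lemma depXY:
  assumes "n \<le> m" "\<forall>i<m. w i = w' i"
  shows "xs w n = xs w' n" "ys w n = ys w' n"
  using xy_dep[OF assms(2), of rho beta eps J h g x0 y0 y1] assms(1) by auto

lemma id1:
  "integral\<^sup>L M (\<lambda>s. (xs (\<lambda>i. W i s) (k+1) - xstar)^2) =
     integral\<^sup>L M (\<lambda>s. (xs (\<lambda>i. W i s) k - xstar)^2)
     + ((g \<omega>)^2 + rho^2) * integral\<^sup>L M (\<lambda>s. (ys (\<lambda>i. W i s) k)^2)
     - 2 * rho * integral\<^sup>L M (\<lambda>s. (xs (\<lambda>i. W i s) k - xstar) * ys (\<lambda>i. W i s) k)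
     + eps * (g \<omega>)^2 * (eps + 2 * integral\<^sup>L M (\<lambda>s. \<bar>ys (\<lambda>i. W i s) k\<bar>))"
proof -
  define F where "F w = (xs w (Suc k) - xstar)^2 - ((xs w k - xstar)^2 + ((g \<omega>)^2+rho^2)*(ys w k)^2
     - 2*rho*((xs w k - xstar) * ys w k) + eps*(g \<omega>)^2*(eps + 2*\<bar>ys w k\<bar>))" for w
  have dF: "dep (Suc k) F"
  proof (rule depI)
    fix w w' :: "nat \<Rightarrow> real" assume a: "\<forall>i<Suc k. w i = w' i"
    show "F w = F w'" unfolding F_def using depXY[of k "Suc k" w w'] depXY[of "Suc k" "Suc k" w w'] a by simp
  qed
  have z: "(F (w(k := \<omega>)) + F (w(k := -\<omega>))) / 2 = 0" for w
  proof -
    have "((xs w k - xstar - rho * ys w k + (\<bar>ys w k\<bar> + eps) * g \<omega>)\<^sup>2 - ((xs w k - xstar)\<^sup>2 + ((g \<omega>)\<^sup>2 + rho\<^sup>2) * (ys w k)\<^sup>2 - 2 * rho * ((xs w k - xstar) * ys w k) + eps * (g \<omega>)\<^sup>2 * (eps + 2 * \<bar>ys w k\<bar>)) +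
     ((xs w k - xstar - rho * ys w k + (\<bar>ys w k\<bar> + eps) * (- g \<omega>))\<^sup>2 - ((xs w k - xstar)\<^sup>2 + ((g \<omega>)\<^sup>2 + rho\<^sup>2) * (ys w k)\<^sup>2 - 2 * rho * ((xs w k - xstar) * ys w k) + eps * (g \<omega>)\<^sup>2 * (eps + 2 * \<bar>ys w k\<bar>)))) / 2 = 0"
      using alg1[OF eps, of "xs w k - xstar" rho "ys w k" "g \<omega>"] by (simp add: algebra_simps)
    moreover have r: "xs w k - rho*ys w k + c - xstar = xs w k - xstar - rho*ys w k + c"
       "xs w k - rho*ys w k - c - xstar = xs w k - xstar - rho*ys w k - c" for c by simp_all
    ultimately show ?thesis unfolding F_def by (simp add: upd_dep hat_g_def godd r)
  qed
  have "integral\<^sup>L M (\<lambda>s. F (\<lambda>i. W i s)) = 0"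
    using avg[OF dF] z by simp
  moreover have "integral\<^sup>L M (\<lambda>s. F (\<lambda>i. W i s)) = 
     integral\<^sup>L M (\<lambda>s. (xs (\<lambda>i. W i s) (k+1) - xstar)^2) -
     (integral\<^sup>L M (\<lambda>s. (xs (\<lambda>i. W i s) k - xstar)^2)
     + ((g \<omega>)^2 + rho^2) * integral\<^sup>L M (\<lambda>s. (ys (\<lambda>i. W i s) k)^2)
     - 2 * rho * integral\<^sup>L M (\<lambda>s. (xs (\<lambda>i. W i s) k - xstar) * ys (\<lambda>i. W i s) k)
     + eps * (g \<omega>)^2 * (eps + 2 * integral\<^sup>L M (\<lambda>s. \<bar>ys (\<lambda>i. W i s) k\<bar>)))"
  proof -
    have D: "dep (Suc k) (\<lambda>w. H (xs w k) (xs w (Suc k)) (ys w k))" for H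
    proof (rule depI)
      fix w w' :: "nat \<Rightarrow> real" assume a: "\<forall>i<Suc k. w i = w' i"
      show "H (xs w k) (xs w (Suc k)) (ys w k) = H (xs w' k) (xs w' (Suc k)) (ys w' k)"
        using depXY[of k "Suc k" w w'] depXY[of "Suc k" "Suc k" w w'] a by simp
    qed
    have i1: "integrable M (\<lambda>s. (xs (\<lambda>i. W i s) (Suc k) - xstar)^2)"
      using integ[OF D[of "\<lambda>a b c. (b - xstar)^2"]] by simp
    have i2: "integrable M (\<lambda>s. (xs (\<lambda>i. W i s) k - xstar)^2)"
      using integ[OF D[of "\<lambda>a b c. (a - xstar)^2"]] by simp
    have i3: "integrable M (\<lambda>s. (ys (\<lambda>i. W i s) k)^2)"
      using integ[OF D[of "\<lambda>a b c. c^2"]] by simp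
    have i4: "integrable M (\<lambda>s. (xs (\<lambda>i. W i s) k - xstar) * ys (\<lambda>i. W i s) k)"
      using integ[OF D[of "\<lambda>a b c. (a - xstar) * c"]] by simp
    have i5: "integrable M (\<lambda>s. \<bar>ys (\<lambda>i. W i s) k\<bar>)"
      using integ[OF D[of "\<lambda>a b c. \<bar>c\<bar>"]] by simp
    show ?thesis unfolding F_def
      using i1 i2 i3 i4 i5 by (simp add: prob_space)
  qed
  ultimately show ?thesis by simp
qed

lemma Jdiff: "J p - J q = \<mu>/2*(p - xstar)^2 - \<mu>/2*(q - xstar)^2"
  unfolding Jdef by simp

lemma id2:
  defines "a \<equiv> h \<omega>" and "b \<equiv> g \<omega>"
  shows "integral\<^sup>L M (\<lambda>s. (ys (\<lambda>i. W i s) (Suc (Suc n)))^2) =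
    (1-beta)^2 * integral\<^sup>L M (\<lambda>s. ys (\<lambda>i. W i s) (Suc n) ^2)
    + 2*(1-beta)*\<mu>*(a*b)*integral\<^sup>L M (\<lambda>s. (xs (\<lambda>i. W i s) (Suc n) - xstar) * ys (\<lambda>i. W i s) (Suc n))
    + \<mu>^2*(rho^2*a^2 + (a*b)^2)*integral\<^sup>L M (\<lambda>s. (xs (\<lambda>i. W i s) n - xstar)^2)
    - \<mu>^2*rho*(3*(a*b)^2 + rho^2*a^2)*integral\<^sup>L M (\<lambda>s. (xs (\<lambda>i. W i s) n - xstar)*ys (\<lambda>i. W i s) n)
    + \<mu>^2*(rho^4*a^2 + (a*b)^2*b^2 + 6*(a*b)^2*rho^2)/4 * integral\<^sup>L M (\<lambda>s. ys (\<lambda>i. W i s) n ^2)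
    + \<mu>^2*eps*((a*b)^2*b^2/4*(eps + 2*integral\<^sup>L M (\<lambda>s. \<bar>ys (\<lambda>i. W i s) n\<bar>))
       - rho^2*a^2/2*integral\<^sup>L M (\<lambda>s. T1 (ys (\<lambda>i. W i s) n) eps * ((xs (\<lambda>i. W i s) (Suc n) - xstar)^2 + (xs (\<lambda>i. W i s) n - xstar)^2))
       + rho^2*(rho^2*a^2 + 2*(a*b)^2)/4*integral\<^sup>L M (\<lambda>s. T1 (ys (\<lambda>i. W i s) n) eps * ys (\<lambda>i. W i s) n ^2)
       + rho^2*(a*b)^2/2*integral\<^sup>L M (\<lambda>s. T2 (ys (\<lambda>i. W i s) n) eps))"
proof -
  define R where "R X1 x y z = (1-beta)^2 * z^2 + 2*(1-beta)*\<mu>*(a*b)* (X1 * z) + \<mu>^2*(rho^2*a^2+(a*b)^2) * x^2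
     - \<mu>^2*rho*(3*(a*b)^2+rho^2*a^2) * (x * y) + \<mu>^2*(rho^4*a^2 + (a*b)^2*b^2 + 6*(a*b)^2*rho^2)/4 * y^2
     + \<mu>^2*eps*((a*b)^2*b^2/4*(eps + 2*\<bar>y\<bar>) - rho^2*a^2/2*(T1 y eps * (X1^2 + x^2))
        + rho^2*(rho^2*a^2 + 2*(a*b)^2)/4 * (T1 y eps * y^2) + rho^2*(a*b)^2/2 * T2 y eps)" for X1 x y z
  define F where "F w = (ys w (Suc (Suc n)))^2 - R (xs w (Suc n) - xstar) (xs w n - xstar) (ys w n) (ys w (Suc n))" for w
  have D: "dep (Suc n) (\<lambda>w. H (xs w n) (xs w (Suc n)) (ys w n) (ys w (Suc n)) (ys w (Suc (Suc n))))" for H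
  proof (rule depI)
    fix w w' :: "nat \<Rightarrow> real" assume a: "\<forall>i<Suc n. w i = w' i"
    show "H (xs w n) (xs w (Suc n)) (ys w n) (ys w (Suc n)) (ys w (Suc (Suc n))) = H (xs w' n) (xs w' (Suc n)) (ys w' n) (ys w' (Suc n)) (ys w' (Suc (Suc n)))"
      using depXY[of n "Suc n" w w'] depXY[of "Suc n" "Suc n" w w'] ys_Suc_dep[OF a] a by simp
  qed
  have dF: "dep (Suc n) F" unfolding F_def using D[of "\<lambda>x0 x1 y0 y1 y2. y2^2 - R (x1 - xstar) (x0 - xstar) y0 y1"] by simp
  have z: "(F (w(n := \<omega>)) + F (w(n := -\<omega>))) / 2 = 0" for w
  proof -
    define x where "x = xs w n - xstar"
    define y where "y = ys w n"
    define z where "z = ys w (Suc n)"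
    have A1: "xs (w(n:=c)) (Suc n) - xstar = x - rho*y + (\<bar>y\<bar> + eps)*g c" for c
      by (simp add: upd_dep hat_g_def x_def y_def algebra_simps)
    have A2: "ys (w(n:=c)) (Suc (Suc n)) = (1-beta)*z + h c/(\<bar>y\<bar> + eps)*(\<mu>/2*(xs (w(n:=c)) (Suc n) - xstar)^2 - \<mu>/2*x^2)" for c
      by (simp add: upd_dep upd_dep2 hat_h_def Jdiff z_def y_def x_def)
    have pw: "F (w(n:=c)) = ((1-beta)*z + h c/(\<bar>y\<bar> + eps)*(\<mu>/2*(x - rho*y + (\<bar>y\<bar> + eps)*g c)^2 - \<mu>/2*x^2))^2
       - R (x - rho*y + (\<bar>y\<bar> + eps)*g c) x y z" for c
      unfolding F_def A2 A1 using upd_dep[of n n w c] upd_dep2[of w n c] by (simp add: x_def y_def z_def)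
    show ?thesis unfolding pw hodd godd
      using alg2[OF eps, where x=x and y=y and z=z and a="h \<omega>" and b="g \<omega>" and rho=rho and beta=beta and mu=\<mu>] unfolding R_def a_def b_def by simp
  qed
  have E0: "integral\<^sup>L M (\<lambda>s. F (\<lambda>i. W i s)) = 0"
    using avg[OF dF] z by simp
  have i1: "integrable M (\<lambda>s. (ys (\<lambda>i. W i s) (Suc (Suc n)))^2)"
    using integ[OF D[of "\<lambda>x0 x1 y0 y1 y2. y2^2"]] by simp
  have i2: "integrable M (\<lambda>s. ys (\<lambda>i. W i s) (Suc n) ^2)"
    using integ[OF D[of "\<lambda>x0 x1 y0 y1 y2. y1^2"]] by simp
  have i3: "integrable M (\<lambda>s. (xs (\<lambda>i. W i s) (Suc n) - xstar) * ys (\<lambda>i. W i s) (Suc n))"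
    using integ[OF D[of "\<lambda>x0 x1 y0 y1 y2. (x1 - xstar) * y1"]] by simp
  have i4: "integrable M (\<lambda>s. (xs (\<lambda>i. W i s) n - xstar)^2)"
    using integ[OF D[of "\<lambda>x0 x1 y0 y1 y2. (x0 - xstar)^2"]] by simp
  have i5: "integrable M (\<lambda>s. (xs (\<lambda>i. W i s) n - xstar)*ys (\<lambda>i. W i s) n)"
    using integ[OF D[of "\<lambda>x0 x1 y0 y1 y2. (x0 - xstar) * y0"]] by simp
  have i6: "integrable M (\<lambda>s. ys (\<lambda>i. W i s) n ^2)"
    using integ[OF D[of "\<lambda>x0 x1 y0 y1 y2. y0^2"]] by simp
  have i7: "integrable M (\<lambda>s. \<bar>ys (\<lambda>i. W i s) n\<bar>)"
    using integ[OF D[of "\<lambda>x0 x1 y0 y1 y2. \<bar>y0\<bar>"]] by simp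
  have i8: "integrable M (\<lambda>s. T1 (ys (\<lambda>i. W i s) n) eps * ((xs (\<lambda>i. W i s) (Suc n) - xstar)^2 + (xs (\<lambda>i. W i s) n - xstar)^2))"
    using integ[OF D[of "\<lambda>x0 x1 y0 y1 y2. T1 y0 eps * ((x1 - xstar)^2 + (x0 - xstar)^2)"]] by simp
  have i9: "integrable M (\<lambda>s. T1 (ys (\<lambda>i. W i s) n) eps * ys (\<lambda>i. W i s) n ^2)"
    using integ[OF D[of "\<lambda>x0 x1 y0 y1 y2. T1 y0 eps * y0^2"]] by simp
  have i10: "integrable M (\<lambda>s. T2 (ys (\<lambda>i. W i s) n) eps)"
    using integ[OF D[of "\<lambda>x0 x1 y0 y1 y2. T2 y0 eps"]] by simp
  have "integral\<^sup>L M (\<lambda>s. F (\<lambda>i. W i s)) = integral\<^sup>L M (\<lambda>s. (ys (\<lambda>i. W i s) (Suc (Suc n)))^2) -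
    ((1-beta)^2 * integral\<^sup>L M (\<lambda>s. ys (\<lambda>i. W i s) (Suc n) ^2)
    + 2*(1-beta)*\<mu>*(a*b)*integral\<^sup>L M (\<lambda>s. (xs (\<lambda>i. W i s) (Suc n) - xstar) * ys (\<lambda>i. W i s) (Suc n))
    + \<mu>^2*(rho^2*a^2 + (a*b)^2)*integral\<^sup>L M (\<lambda>s. (xs (\<lambda>i. W i s) n - xstar)^2)
    - \<mu>^2*rho*(3*(a*b)^2 + rho^2*a^2)*integral\<^sup>L M (\<lambda>s. (xs (\<lambda>i. W i s) n - xstar)*ys (\<lambda>i. W i s) n)
    + \<mu>^2*(rho^4*a^2 + (a*b)^2*b^2 + 6*(a*b)^2*rho^2)/4 * integral\<^sup>L M (\<lambda>s. ys (\<lambda>i. W i s) n ^2)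
    + \<mu>^2*eps*((a*b)^2*b^2/4*(eps + 2*integral\<^sup>L M (\<lambda>s. \<bar>ys (\<lambda>i. W i s) n\<bar>))
       - rho^2*a^2/2*integral\<^sup>L M (\<lambda>s. T1 (ys (\<lambda>i. W i s) n) eps * ((xs (\<lambda>i. W i s) (Suc n) - xstar)^2 + (xs (\<lambda>i. W i s) n - xstar)^2))
       + rho^2*(rho^2*a^2 + 2*(a*b)^2)/4*integral\<^sup>L M (\<lambda>s. T1 (ys (\<lambda>i. W i s) n) eps * ys (\<lambda>i. W i s) n ^2)
       + rho^2*(a*b)^2/2*integral\<^sup>L M (\<lambda>s. T2 (ys (\<lambda>i. W i s) n) eps)))"
    unfolding F_def R_def using i1 i2 i3 i4 i5 i6 i7 i8 i9 i10 by (simp add: prob_space)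
  with E0 show ?thesis by simp
qed

end


theorem lemma7:
  fixes M :: "'s measure" and W :: "nat \<Rightarrow> 's \<Rightarrow> real"
    and rho beta eps \<omega> \<mu> xstar Jstar x0 y0 y1 :: real
    and J h g :: "real \<Rightarrow> real" and k :: nat
  assumes "prob_space M"
    and "rho > 0" and "0 < beta" and "beta < 2" and "eps > 0" and "\<omega> > 0"
    and "\<And>i. W i \<in> borel_measurable M"
    and "prob_space.indep_vars M (\<lambda>_. borel) W UNIV"
    and "\<And>i s. s \<in> space M \<Longrightarrow> W i s = - \<omega> \<or> W i s = \<omega>"
    and "\<And>i. measure M {s \<in> space M. W i s = \<omega>} = 1/2"
    and "\<And>i. measure M {s \<in> space M. W i s = - \<omega>} = 1/2"
    and "\<And>v. h (- v) = - h v" and "\<And>v. g (- v) = - g v"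
    and "\<And>v. sgn (g v) = sgn (h v)"
    and "\<And>v. g v = 0 \<longleftrightarrow> v = 0" and "\<And>v. h v = 0 \<longleftrightarrow> v = 0"
    and "\<mu> > 0"
    and "J = (\<lambda>x. Jstar + \<mu> / 2 * (x - xstar)^2)"
    and "k \<ge> 1"
  shows
   "let X = (\<lambda>n s. xseq rho beta eps J h g x0 y0 y1 (\<lambda>i. W i s) n - xstar);
        Y = (\<lambda>n s. yseq rho beta eps J h g x0 y0 y1 (\<lambda>i. W i s) n);
        E = (\<lambda>f. integral\<^sup>L M f);
        chi = E (\<lambda>s. h (W k s)^2);
        psi = E (\<lambda>s. g (W k s)^2);
        gam = E (\<lambda>s. h (W k s) * g (W k s));
        Ry = \<mu>^2 * eps * (gam^2 * psi / 4 * (eps + 2 * E (\<lambda>s. \<bar>Y (k-1) s\<bar>))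
              - rho^2 * chi / 2 * E (\<lambda>s. T1 (Y (k-1) s) eps * (X k s ^ 2 + X (k-1) s ^ 2))
              + rho^2 * (rho^2 * chi + 2 * gam^2) / 4 * E (\<lambda>s. T1 (Y (k-1) s) eps * Y (k-1) s ^ 2)
              + rho^2 * gam^2 / 2 * E (\<lambda>s. T2 (Y (k-1) s) eps))
    in E (\<lambda>s. X (k+1) s ^ 2) = E (\<lambda>s. X k s ^ 2) + (psi + rho^2) * E (\<lambda>s. Y k s ^ 2)
          - 2 * rho * E (\<lambda>s. X k s * Y k s) + eps * psi * (eps + 2 * E (\<lambda>s. \<bar>Y k s\<bar>))
     \<and> E (\<lambda>s. Y (k+1) s ^ 2) = (1 - beta)^2 * E (\<lambda>s. Y k s ^ 2)
          + 2 * (1 - beta) * \<mu> * gam * E (\<lambda>s. X k s * Y k s)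
          + \<mu>^2 * (rho^2 * chi + gam^2) * E (\<lambda>s. X (k-1) s ^ 2)
          - \<mu>^2 * rho * (3 * gam^2 + rho^2 * chi) * E (\<lambda>s. X (k-1) s * Y (k-1) s)
          + \<mu>^2 * (rho^4 * chi + gam^2 * psi + 6 * gam^2 * rho^2) / 4 * E (\<lambda>s. Y (k-1) s ^ 2)
          + Ry"
proof -
  interpret sys M W \<omega> rho beta eps \<mu> xstar Jstar x0 y0 y1 J h g
    by (intro sys.intro coin.intro coin_axioms.intro sys_axioms.intro) (use assms in auto)
  obtain n where k: "k = Suc n" using assms(19) by (cases k) auto
  have sp: "W k s = - \<omega> \<or> W k s = \<omega>" if "s \<in> space M" for s using assms(9) that by blast
  have hw: "h (W k s)^2 = (h \<omega>)^2 \<and> g (W k s)^2 = (g \<omega>)^2 \<and> h (W k s) * g (W k s) = h \<omega> * g \<omega>"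
    if "s \<in> space M" for s using sp[OF that] by (auto simp: hodd godd)
  have chi: "integral\<^sup>L M (\<lambda>s. h (W k s)^2) = (h \<omega>)^2"
  proof -
    have "integral\<^sup>L M (\<lambda>s. h (W k s)^2) = integral\<^sup>L M (\<lambda>s. (h \<omega>)^2)"
      by (rule Bochner_Integration.integral_cong) (use hw in auto)
    then show ?thesis by (simp add: prob_space)
  qed
  have psi: "integral\<^sup>L M (\<lambda>s. g (W k s)^2) = (g \<omega>)^2"
  proof -
    have "integral\<^sup>L M (\<lambda>s. g (W k s)^2) = integral\<^sup>L M (\<lambda>s. (g \<omega>)^2)"
      by (rule Bochner_Integration.integral_cong) (use hw in auto)
    then show ?thesis by (simp add: prob_space)
  qed
  have gam: "integral\<^sup>L M (\<lambda>s. h (W k s) * g (W k s)) = h \<omega> * g \<omega>"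
  proof -
    have "integral\<^sup>L M (\<lambda>s. h (W k s) * g (W k s)) = integral\<^sup>L M (\<lambda>s. h \<omega> * g \<omega>)"
      by (rule Bochner_Integration.integral_cong) (use hw in auto)
    then show ?thesis by (simp add: prob_space)
  qed
  show ?thesis unfolding Let_def chi psi gam
    using id1[of k] id2[of n] unfolding k by simp
qed

end
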